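(* Let $G=(V,E)$ be a connected chordal graph with at least two vertices and let $v\in V$. Then: (1) $v\in\mathrm{core}(G)$ if and only if $v\in V^+$; (2) $v\in\mathrm{anticore}(G)$ if and only if $\gamma(G_v+u)=\gamma(G)+1$; (3) $v\in\mathrm{corona}(G)\setminus\mathrm{core}(G)$ if and only if either $v\in V^-$, or $v\in V^0$ and $\gamma(G_v+u)=\gamma(G)$.
   Context: All graphs are finite, simple and undirected. A graph is chordal if it has no induced cycle of length at least four. $\gamma(G)$ is the domination number; a minimum dominating set (mds) is a dominating set of size $\gamma(G)$. $\mathrm{core}(G)$ is the set of vertices in every mds, $\mathrm{corona}(G)$ the set of vertices in at least one mds, $\mathrm{anticore}(G)=V\setminus\mathrm{corona}(G)$. With $G-v$ denoting $G$ with $v$ deleted: $V^+=\{v:\gamma(G-v)>\gamma(G)\}$, $V^0=\{v:\gamma(G-v)=\gamma(G)\}$, $V^-=\{v:\gamma(G-v)<\gamma(G)\}$. $G_v+u$ is the graph obtained from $G$ by adding a new vertex $u$ and the single edge $uv$. *)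

theory Defs
  imports Main
begin

definition simple_graph :: "'a set \<Rightarrow> ('a \<Rightarrow> 'a \<Rightarrow> bool) \<Rightarrow> bool" where
  "simple_graph V E \<longleftrightarrow> finite V \<and> (\<forall>x y. E x y \<longrightarrow> x \<in> V \<and> y \<in> V)
     \<and> (\<forall>x y. E x y \<longrightarrow> E y x) \<and> (\<forall>x. \<not> E x x)"

definition connected_graph :: "'a set \<Rightarrow> ('a \<Rightarrow> 'a \<Rightarrow> bool) \<Rightarrow> bool" where
  "connected_graph V E \<longleftrightarrow> (\<forall>x\<in>V. \<forall>y\<in>V. E\<^sup>*\<^sup>* x y)"

definition induced_cycle :: "'a set \<Rightarrow> ('a \<Rightarrow> 'a \<Rightarrow> bool) \<Rightarrow> 'a list \<Rightarrow> bool" where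
  "induced_cycle V E xs \<longleftrightarrow> distinct xs \<and> set xs \<subseteq> V \<and> length xs \<ge> 3 \<and>
     (\<forall>i<length xs. \<forall>j<length xs.
        E (xs ! i) (xs ! j) \<longleftrightarrow> (j = Suc i mod length xs \<or> i = Suc j mod length xs))"

definition chordal :: "'a set \<Rightarrow> ('a \<Rightarrow> 'a \<Rightarrow> bool) \<Rightarrow> bool" where
  "chordal V E \<longleftrightarrow> \<not> (\<exists>xs. induced_cycle V E xs \<and> length xs \<ge> 4)"

definition dominating :: "'a set \<Rightarrow> ('a \<Rightarrow> 'a \<Rightarrow> bool) \<Rightarrow> 'a set \<Rightarrow> bool" where
  "dominating V E D \<longleftrightarrow> D \<subseteq> V \<and> (\<forall>x\<in>V. x \<in> D \<or> (\<exists>y\<in>D. E x y))"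

definition domination_number :: "'a set \<Rightarrow> ('a \<Rightarrow> 'a \<Rightarrow> bool) \<Rightarrow> nat" where
  "domination_number V E = Min (card ` {D. dominating V E D})"

definition mds :: "'a set \<Rightarrow> ('a \<Rightarrow> 'a \<Rightarrow> bool) \<Rightarrow> 'a set \<Rightarrow> bool" where
  "mds V E D \<longleftrightarrow> dominating V E D \<and> card D = domination_number V E"

definition core :: "'a set \<Rightarrow> ('a \<Rightarrow> 'a \<Rightarrow> bool) \<Rightarrow> 'a set" where
  "core V E = {v \<in> V. \<forall>D. mds V E D \<longrightarrow> v \<in> D}"

definition corona :: "'a set \<Rightarrow> ('a \<Rightarrow> 'a \<Rightarrow> bool) \<Rightarrow> 'a set" where
  "corona V E = {v \<in> V. \<exists>D. mds V E D \<and> v \<in> D}"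

definition anticore :: "'a set \<Rightarrow> ('a \<Rightarrow> 'a \<Rightarrow> bool) \<Rightarrow> 'a set" where
  "anticore V E = V - corona V E"

definition del_vertex_edges :: "('a \<Rightarrow> 'a \<Rightarrow> bool) \<Rightarrow> 'a \<Rightarrow> ('a \<Rightarrow> 'a \<Rightarrow> bool)" where
  "del_vertex_edges E v = (\<lambda>x y. E x y \<and> x \<noteq> v \<and> y \<noteq> v)"

definition gamma_del :: "'a set \<Rightarrow> ('a \<Rightarrow> 'a \<Rightarrow> bool) \<Rightarrow> 'a \<Rightarrow> nat" where
  "gamma_del V E v = domination_number (V - {v}) (del_vertex_edges E v)"

definition V_plus :: "'a set \<Rightarrow> ('a \<Rightarrow> 'a \<Rightarrow> bool) \<Rightarrow> 'a set" where
  "V_plus V E = {v \<in> V. gamma_del V E v > domination_number V E}"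

definition V_zero :: "'a set \<Rightarrow> ('a \<Rightarrow> 'a \<Rightarrow> bool) \<Rightarrow> 'a set" where
  "V_zero V E = {v \<in> V. gamma_del V E v = domination_number V E}"

definition V_minus :: "'a set \<Rightarrow> ('a \<Rightarrow> 'a \<Rightarrow> bool) \<Rightarrow> 'a set" where
  "V_minus V E = {v \<in> V. gamma_del V E v < domination_number V E}"

text \<open>G_v + u: add a new vertex u (assumed not in V) and the single edge uv.\<close>
definition add_pendant_edges :: "('a \<Rightarrow> 'a \<Rightarrow> bool) \<Rightarrow> 'a \<Rightarrow> 'a \<Rightarrow> ('a \<Rightarrow> 'a \<Rightarrow> bool)" where
  "add_pendant_edges E v u = (\<lambda>x y. E x y \<or> (x = u \<and> y = v) \<or> (x = v \<and> y = u))"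

definition gamma_pendant :: "'a set \<Rightarrow> ('a \<Rightarrow> 'a \<Rightarrow> bool) \<Rightarrow> 'a \<Rightarrow> 'a \<Rightarrow> nat" where
  "gamma_pendant V E v u = domination_number (insert u V) (add_pendant_edges E v u)"

end

theory Submission
  imports Defs
begin

lemma dom_fin: "finite V \<Longrightarrow> finite (card ` {D. dominating V E D})"
  by (rule finite_imageI, rule finite_subset[of _ "Pow V"]) (auto simp: dominating_def)

lemma dom_V: "dominating V E V" by (simp add: dominating_def)

lemma gamma_le: "finite V \<Longrightarrow> dominating V E D \<Longrightarrow> domination_number V E \<le> card D"
  unfolding domination_number_def by (rule Min_le) (auto simp: dom_fin)

lemma ex_mds: "finite V \<Longrightarrow> \<exists>D. mds V E D"
proof -
  assume f: "finite V"
  have "domination_number V E \<in> card ` {D. dominating V E D}"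
    unfolding domination_number_def using dom_fin[OF f] dom_V[of V E] by (intro Min_in) auto
  then show ?thesis unfolding mds_def by auto
qed

lemma mds_fin: "finite V \<Longrightarrow> mds V E D \<Longrightarrow> finite D"
  unfolding mds_def dominating_def by (auto intro: finite_subset)

definition walk :: "('a \<Rightarrow> 'a \<Rightarrow> bool) \<Rightarrow> 'a set \<Rightarrow> (nat \<Rightarrow> 'a) \<Rightarrow> nat \<Rightarrow> 'a \<Rightarrow> 'a \<Rightarrow> bool" where
  "walk E W p n a b \<longleftrightarrow> p 0 = a \<and> p n = b \<and> (\<forall>i<n. E (p i) (p (Suc i))) \<and> (\<forall>i. 0 < i \<and> i < n \<longrightarrow> p i \<in> W)"


lemma walk_short_edge:
  assumes w: "walk E W p n a b" and ij: "i < j" "j \<le> n" and e: "E (p i) (p j)"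
  shows "walk E W (\<lambda>k. if k \<le> i then p k else p (k + (j - i - 1))) (n - (j - i - 1)) a b"
proof -
  define d where "d = j - i - 1"
  have jd: "j = i + 1 + d" using ij d_def by simp
  have n': "n - d > i" using ij jd by simp
  show ?thesis unfolding walk_def d_def[symmetric]
  proof (intro conjI allI impI)
    show "(if 0 \<le> i then p 0 else p (0 + d)) = a" using w by (simp add: walk_def)
    show "(if n - d \<le> i then p (n - d) else p (n - d + d)) = b" using w n' by (simp add: walk_def)
  next
    fix k assume k: "k < n - d"
    show "E (if k \<le> i then p k else p (k + d)) (if Suc k \<le> i then p (Suc k) else p (Suc k + d))"
    proof (cases "k < i")
      case True then show ?thesis using w ij by (simp add: walk_def)
    next
      case False
      show ?thesis
      proof (cases "k = i")
        case True then show ?thesis using e jd by simp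
      next
        case False
        then have "k > i" using \<open>\<not> k < i\<close> by simp
        then show ?thesis using w k by (auto simp: walk_def)
      qed
    qed
  next
    fix k assume k: "0 < k \<and> k < n - d"
    show "(if k \<le> i then p k else p (k + d)) \<in> W"
      using w k ij jd by (auto simp: walk_def)
  qed
qed

lemma walk_short_eq:
  assumes w: "walk E W p n a b" and ij: "i < j" "j \<le> n" and e: "p i = p j"
  shows "walk E W (\<lambda>k. if k \<le> i then p k else p (k + (j - i))) (n - (j - i)) a b"
proof -
  define d where "d = j - i"
  have jd: "j = i + d" using ij d_def by simp
  have n': "n - d \<ge> i" using ij jd by simp
  show ?thesis unfolding walk_def d_def[symmetric]
  proof (intro conjI allI impI)
    show "(if 0 \<le> i then p 0 else p (0 + d)) = a" using w by (simp add: walk_def)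
    show "(if n - d \<le> i then p (n - d) else p (n - d + d)) = b" using w n' ij e jd
      by (cases "n - d = i") (auto simp: walk_def)
  next
    fix k assume k: "k < n - d"
    show "E (if k \<le> i then p k else p (k + d)) (if Suc k \<le> i then p (Suc k) else p (Suc k + d))"
    proof (cases "k < i")
      case True then show ?thesis using w ij by (simp add: walk_def)
    next
      case False
      show ?thesis
      proof (cases "k = i")
        case True then show ?thesis using e jd w k by (simp add: walk_def)
      next
        case False
        then have "k > i" using \<open>\<not> k < i\<close> by simp
        then show ?thesis using w k by (auto simp: walk_def)
      qed
    qed
  next
    fix k assume k: "0 < k \<and> k < n - d"
    show "(if k \<le> i then p k else p (k + d)) \<in> W"
      using w k ij jd by (auto simp: walk_def)
  qed
qed


lemma Suc_mod_less: "a < m \<Longrightarrow> Suc a mod m = (if Suc a = m then 0 else Suc a)"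
  by auto

lemma min_walk_cycle:
  assumes sg: "simple_graph V E" and ch: "chordal V E"
    and w: "walk E W p n x1 x2"
    and mini: "\<And>n' q. n' < n \<Longrightarrow> \<not> walk E W q n' x1 x2"
    and v1: "E v x1" and v2: "E v x2" and ne: "\<not> E x1 x2" "x1 \<noteq> x2"
    and Wv: "\<And>x. x \<in> W \<Longrightarrow> x \<noteq> v \<and> \<not> E v x"
  shows False
proof -
  have sym: "\<And>x y. E x y \<Longrightarrow> E y x" and irr: "\<And>x. \<not> E x x"
    and EV: "\<And>x y. E x y \<Longrightarrow> x \<in> V \<and> y \<in> V"
    using sg unfolding simple_graph_def by blast+
  have p0: "p 0 = x1" and pn: "p n = x2" and pe: "\<And>i. i < n \<Longrightarrow> E (p i) (p (Suc i))"
    and pW: "\<And>i. 0 < i \<Longrightarrow> i < n \<Longrightarrow> p i \<in> W"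
    using w unfolding walk_def by auto
  have n2: "n \<ge> 2"
  proof (rule ccontr)
    assume "\<not> n \<ge> 2"
    then have "n = 0 \<or> n = 1" by auto
    then show False
    proof
      assume "n = 0" then show False using p0 pn ne by simp
    next
      assume "n = 1" then show False using pe[of 0] p0 pn ne by simp
    qed
  qed
  have noshort: "\<not> E (p i) (p j)" if "Suc i < j" "j \<le> n" for i j
  proof
    assume "E (p i) (p j)"
    from walk_short_edge[OF w _ that(2) this] that have "\<exists>q. walk E W q (n - (j - i - 1)) x1 x2" by auto
    moreover have "n - (j - i - 1) < n" using that by simp
    ultimately show False using mini by blast
  qed
  have inj: "p i \<noteq> p j" if "i < j" "j \<le> n" for i j
  proof
    assume "p i = p j"
    from walk_short_eq[OF w that this] have "\<exists>q. walk E W q (n - (j - i)) x1 x2" by blast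
    moreover have "n - (j - i) < n" using that by simp
    ultimately show False using mini by blast
  qed
  have adj: "E (p k) (p l) \<longleftrightarrow> (l = Suc k \<or> k = Suc l)" if "k \<le> n" "l \<le> n" for k l
  proof
    assume e: "E (p k) (p l)"
    show "l = Suc k \<or> k = Suc l"
    proof (rule ccontr)
      assume "\<not> (l = Suc k \<or> k = Suc l)"
      then have "k = l \<or> Suc k < l \<or> Suc l < k" by auto
      then show False using e noshort[of k l] noshort[of l k] that sym irr by auto
    qed
  next
    assume "l = Suc k \<or> k = Suc l"
    then show "E (p k) (p l)" using pe[of k] pe[of l] that sym by auto
  qed
  have pv: "p k \<noteq> v" if "k \<le> n" for k
  proof (cases "k = 0 \<or> k = n")
    case True then show ?thesis using p0 pn v1 v2 irr by auto
  next
    case False then show ?thesis using pW[of k] Wv that by auto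
  qed
  have vadj: "E v (p k) \<longleftrightarrow> (k = 0 \<or> k = n)" if "k \<le> n" for k
  proof (cases "k = 0 \<or> k = n")
    case True then show ?thesis using p0 pn v1 v2 by auto
  next
    case False then show ?thesis using pW[of k] Wv that by auto
  qed
  have pV: "p k \<in> V" if "k \<le> n" for k
  proof (cases "k < n")
    case True then show ?thesis using pe[of k] EV by blast
  next
    case False then show ?thesis using pn v2 EV that by auto
  qed
  have vV: "v \<in> V" using v1 EV by blast
  define xs where "xs = v # map p [0..<Suc n]"
  have len: "length xs = Suc (Suc n)" unfolding xs_def by simp
  have x0: "xs ! 0 = v" unfolding xs_def by simp
  have xS: "xs ! Suc k = p k" if "k \<le> n" for k
    unfolding xs_def using that by (simp del: upt_Suc add: nth_map_upt)
  have d1: "v \<notin> set (map p [0..<Suc n])" using pv by (auto simp del: upt_Suc simp: less_Suc_eq_le) blast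
  have d2: "inj_on p {0..<Suc n}"
  proof (rule inj_onI)
    fix a b assume "a \<in> {0..<Suc n}" "b \<in> {0..<Suc n}" "p a = p b"
    then show "a = b" using inj[of a b] inj[of b a] by (metis atLeastLessThan_iff less_Suc_eq_le linorder_neqE_nat)
  qed
  have dist: "distinct xs" unfolding xs_def using d1 d2 by (simp only: distinct.simps distinct_map distinct_upt) (simp del: upt_Suc)
  have setV: "set xs \<subseteq> V" unfolding xs_def using vV pV by (auto simp del: upt_Suc)
  have ind: "\<forall>i<length xs. \<forall>j<length xs.
        E (xs ! i) (xs ! j) \<longleftrightarrow> (j = Suc i mod length xs \<or> i = Suc j mod length xs)"
  proof (intro allI impI)
    fix i j assume i: "i < length xs" and j: "j < length xs"
    show "E (xs ! i) (xs ! j) \<longleftrightarrow> (j = Suc i mod length xs \<or> i = Suc j mod length xs)"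
    proof (cases i)
      case 0
      show ?thesis
      proof (cases j)
        case 0 then show ?thesis unfolding \<open>i = 0\<close> len using irr by simp
      next
        case (Suc l)
        then have l: "l \<le> n" using j len by simp
        have "E (xs ! i) (xs ! j) \<longleftrightarrow> (l = 0 \<or> l = n)" unfolding \<open>i = 0\<close> Suc x0 xS[OF l] by (rule vadj[OF l])
        also have "\<dots> \<longleftrightarrow> (j = Suc i mod length xs \<or> i = Suc j mod length xs)"
        proof -
          have m1: "Suc 0 mod Suc (Suc n) = Suc 0" by simp
          have m2: "Suc (Suc l) mod Suc (Suc n) = (if l = n then 0 else Suc (Suc l))"
            using l by (simp add: Suc_mod_less)
          show ?thesis unfolding len \<open>i = 0\<close> Suc m1 m2 by simp
        qed
        finally show ?thesis .
      qed
    next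
      case (Suc k)
      then have k: "k \<le> n" using i len by simp
      show ?thesis
      proof (cases j)
        case 0
        have "E (xs ! i) (xs ! j) \<longleftrightarrow> (k = 0 \<or> k = n)" unfolding \<open>j = 0\<close> Suc x0 xS[OF k] using vadj[OF k] sym by metis
        also have "\<dots> \<longleftrightarrow> (j = Suc i mod length xs \<or> i = Suc j mod length xs)"
        proof -
          have m1: "Suc 0 mod Suc (Suc n) = Suc 0" by simp
          have m2: "Suc (Suc k) mod Suc (Suc n) = (if k = n then 0 else Suc (Suc k))"
            using k by (simp add: Suc_mod_less)
          show ?thesis unfolding len \<open>j = 0\<close> Suc m1 m2 by simp
        qed
        finally show ?thesis .
      next
        case (Suc l)
        then have l: "l \<le> n" using j len by simp
        have "E (xs ! i) (xs ! j) \<longleftrightarrow> (l = Suc k \<or> k = Suc l)" unfolding \<open>i = Suc k\<close> Suc xS[OF k] xS[OF l] by (rule adj[OF k l])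
        also have "\<dots> \<longleftrightarrow> (j = Suc i mod length xs \<or> i = Suc j mod length xs)"
        proof -
          have m1: "Suc (Suc l) mod Suc (Suc n) = (if l = n then 0 else Suc (Suc l))"
            using l by (simp add: Suc_mod_less)
          have m2: "Suc (Suc k) mod Suc (Suc n) = (if k = n then 0 else Suc (Suc k))"
            using k by (simp add: Suc_mod_less)
          show ?thesis unfolding len \<open>i = Suc k\<close> Suc m1 m2 using k l by auto
        qed
        finally show ?thesis .
      qed
    qed
  qed
  have "induced_cycle V E xs" unfolding induced_cycle_def using dist setV ind len n2 by auto
  moreover have "length xs \<ge> 4" using len n2 by simp
  ultimately show False using ch unfolding chordal_def by blast
qed


lemma rt_path:
  assumes "(\<lambda>x y. E x y \<and> x \<in> W \<and> y \<in> W)\<^sup>*\<^sup>* a b" "a \<in> W"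
  shows "\<exists>m p. p 0 = a \<and> p m = b \<and> (\<forall>i<m. E (p i) (p (Suc i))) \<and> (\<forall>i\<le>m. p i \<in> W)"
  using assms(1)
proof (induction rule: rtranclp_induct)
  case base
  show ?case using assms(2) by (intro exI[of _ 0] exI[of _ "\<lambda>_. a"]) simp
next
  case (step b c)
  then obtain m p where p: "p 0 = a" "p m = b" "\<forall>i<m. E (p i) (p (Suc i))" "\<forall>i\<le>m. p i \<in> W" by blast
  define p' where "p' = p(Suc m := c)"
  have "p' 0 = a" using p by (simp add: p'_def)
  moreover have "p' (Suc m) = c" by (simp add: p'_def)
  moreover have "\<forall>i<Suc m. E (p' i) (p' (Suc i))"
  proof (intro allI impI)
    fix i assume "i < Suc m"
    then show "E (p' i) (p' (Suc i))" using p step by (cases "i = m") (auto simp: p'_def)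
  qed
  moreover have "\<forall>i\<le>Suc m. p' i \<in> W" using p step by (auto simp: p'_def le_Suc_eq)
  ultimately show ?case by blast
qed

lemma clique_lemma:
  assumes sg: "simple_graph V E" and ch: "chordal V E"
    and v1: "E v x1" and v2: "E v x2" and ne: "x1 \<noteq> x2"
    and c1: "E x1 c1" and c2: "E x2 c2" and c1W: "c1 \<in> W"
    and R: "(\<lambda>x y. E x y \<and> x \<in> W \<and> y \<in> W)\<^sup>*\<^sup>* c1 c2"
    and Wv: "\<And>x. x \<in> W \<Longrightarrow> x \<noteq> v \<and> \<not> E v x"
  shows "E x1 x2"
proof (rule ccontr)
  assume nE: "\<not> E x1 x2"
  have sym: "\<And>x y. E x y \<Longrightarrow> E y x" using sg unfolding simple_graph_def by blast
  obtain m p where p: "p 0 = c1" "p m = c2" "\<forall>i<m. E (p i) (p (Suc i))" "\<forall>i\<le>m. p i \<in> W"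
    using rt_path[OF R c1W] by blast
  define q where "q k = (if k = 0 then x1 else if k \<le> Suc m then p (k - 1) else x2)" for k
  have "walk E W q (Suc (Suc m)) x1 x2"
    unfolding walk_def
  proof (intro conjI allI impI)
    show "q 0 = x1" by (simp add: q_def)
    show "q (Suc (Suc m)) = x2" by (simp add: q_def)
  next
    fix i assume i: "i < Suc (Suc m)"
    show "E (q i) (q (Suc i))"
    proof (cases "i = 0")
      case True then show ?thesis using c1 p by (simp add: q_def)
    next
      case False
      show ?thesis
      proof (cases "i = Suc m")
        case True then show ?thesis using c2 p sym by (simp add: q_def)
      next
        case False
        then have "i - 1 < m" "Suc (i - 1) = i" using \<open>i \<noteq> 0\<close> i by auto
        then show ?thesis using p(3) \<open>i \<noteq> 0\<close> False i by (auto simp: q_def)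
      qed
    qed
  next
    fix i assume "0 < i \<and> i < Suc (Suc m)"
    then show "q i \<in> W" using p(4) by (auto simp: q_def)
  qed
  then have ex: "\<exists>n q. walk E W q n x1 x2" by blast
  obtain n where n: "\<exists>q. walk E W q n x1 x2" and mini: "\<And>n'. n' < n \<Longrightarrow> \<not> (\<exists>q. walk E W q n' x1 x2)"
    using ex exists_least_iff[of "\<lambda>n. \<exists>q. walk E W q n x1 x2"] by blast
  obtain q' where "walk E W q' n x1 x2" using n by blast
  from min_walk_cycle[OF sg ch this _ v1 v2 nE ne Wv] mini show False by blast
qed


lemma exit_lemma:
  assumes "E\<^sup>*\<^sup>* a b" "a \<in> W" "b \<notin> W"
  shows "\<exists>x y. (\<lambda>x y. E x y \<and> x \<in> W \<and> y \<in> W)\<^sup>*\<^sup>* a x \<and> x \<in> W \<and> y \<notin> W \<and> E x y"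
  using assms
proof (induction rule: converse_rtranclp_induct)
  case base then show ?case by simp
next
  case (step a a')
  show ?case
  proof (cases "a' \<in> W")
    case True
    then obtain x y where xR: "(\<lambda>x y. E x y \<and> x \<in> W \<and> y \<in> W)\<^sup>*\<^sup>* a' x" and "x \<in> W" "y \<notin> W" "E x y"
      using step by blast
    moreover have st: "(\<lambda>x y. E x y \<and> x \<in> W \<and> y \<in> W) a a'" using step True by simp
    note converse_rtranclp_into_rtranclp[OF st xR]
    ultimately show ?thesis by blast
  next
    case False then show ?thesis using step by blast
  qed
qed

lemma rt_sym:
  assumes "(\<lambda>x y. E x y \<and> x \<in> W \<and> y \<in> W)\<^sup>*\<^sup>* a b" "\<And>x y. E x y \<Longrightarrow> E y x"
  shows "(\<lambda>x y. E x y \<and> x \<in> W \<and> y \<in> W)\<^sup>*\<^sup>* b a"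
  using assms(1)
proof (induction rule: rtranclp_induct)
  case base then show ?case by simp
next
  case (step b c)
  then have st: "(\<lambda>x y. E x y \<and> x \<in> W \<and> y \<in> W) c b" using assms(2) by simp
  show ?case using converse_rtranclp_into_rtranclp[OF st step.IH] .
qed

lemma rt_W:
  assumes "(\<lambda>x y. E x y \<and> x \<in> W \<and> y \<in> W)\<^sup>*\<^sup>* a b" "a \<in> W"
  shows "b \<in> W"
  using assms by (induction rule: rtranclp_induct) auto


lemma core_plus:
  assumes sg: "simple_graph V E" and conn: "connected_graph V E" and ch: "chordal V E"
    and c2: "card V \<ge> 2" and vV: "v \<in> V" and core: "v \<in> core V E"
    and le: "gamma_del V E v \<le> domination_number V E"
  shows False
proof -
  have sym: "\<And>x y. E x y \<Longrightarrow> E y x" and irr: "\<And>x. \<not> E x x"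
    and EV: "\<And>x y. E x y \<Longrightarrow> x \<in> V \<and> y \<in> V" and fin: "finite V"
    using sg unfolding simple_graph_def by blast+
  define k where "k = domination_number V E"
  define H where "H = del_vertex_edges E v"
  have finVv: "finite (V - {v})" using fin by simp
  have avoid: False if "dominating V E X" "v \<notin> X" "card X \<le> k" for X
  proof -
    have "k \<le> card X" using gamma_le[OF fin that(1)] k_def by simp
    then have "mds V E X" using that unfolding mds_def k_def by simp
    then show False using core that(2) unfolding core_def by blast
  qed
  have domH: "dominating (V - {v}) H X \<longleftrightarrow> X \<subseteq> V - {v} \<and> (\<forall>x\<in>V - {v}. x \<in> X \<or> (\<exists>y\<in>X. E x y))" for X
    unfolding dominating_def H_def del_vertex_edges_def by blast
  obtain y where yV: "y \<in> V" "y \<noteq> v"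
  proof -
    have "\<not> V \<subseteq> {v}" using c2 card_mono[of "{v}" V] by (metis card.empty card.insert empty_iff finite.intros(1) le_0_eq not_less_eq_eq numeral_2_eq_2 card_mono finite.emptyI finite_insert subset_singletonD card_1_singleton_iff)
    then show ?thesis using that by blast
  qed
  obtain w where vw: "E v w"
  proof -
    have "E\<^sup>*\<^sup>* v y" using conn vV yV unfolding connected_graph_def by blast
    then show ?thesis using yV(2) that by (metis converse_rtranclpE)
  qed
  obtain Y where Y: "mds (V - {v}) H Y" using ex_mds[OF finVv] by blast
  have cardY: "card Y = gamma_del V E v" using Y unfolding mds_def gamma_del_def H_def by simp
  have Ydom: "Y \<subseteq> V - {v}" "\<And>x. x \<in> V - {v} \<Longrightarrow> x \<in> Y \<or> (\<exists>y\<in>Y. E x y)"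
    using Y domH unfolding mds_def by blast+
  have finY: "finite Y" using Ydom(1) finVv finite_subset by blast
  have cardYk: "card Y = k"
  proof (rule ccontr)
    assume "card Y \<noteq> k"
    then have lt: "card Y < k" using cardY le k_def by simp
    have "dominating V E (insert w Y)"
      unfolding dominating_def using Ydom vw EV by blast
    moreover have "v \<notin> insert w Y" using Ydom vw irr by blast
    moreover have "card (insert w Y) \<le> k" using lt card_insert_le_m1 finY
      by (metis Suc_leI card_insert_if le_SucI order.strict_implies_order)
    ultimately show False using avoid by blast
  qed
  have YN: "\<not> E v y" if "y \<in> Y" for y
  proof
    assume "E v y"
    have "dominating V E Y" unfolding dominating_def using Ydom \<open>E v y\<close> that by blast
    moreover have "v \<notin> Y" using Ydom by blast
    ultimately show False using avoid[of Y] cardYk by simp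
  qed
  define N where "N = {x. E v x}"
  define W where "W = V - {v} - N"
  have Wv: "\<And>x. x \<in> W \<Longrightarrow> x \<noteq> v \<and> \<not> E v x" unfolding W_def N_def by blast
  have YW: "Y \<subseteq> W" using Ydom(1) YN unfolding W_def N_def by blast
  have finW: "finite W" using fin unfolding W_def by simp
  obtain D where D: "mds V E D" using ex_mds[OF fin] by blast
  have vD: "v \<in> D" using core D unfolding core_def by blast
  have DV: "D \<subseteq> V" and Ddom: "\<And>x. x \<in> V \<Longrightarrow> x \<in> D \<or> (\<exists>y\<in>D. E x y)" and cardD: "card D = k"
    using D unfolding mds_def dominating_def k_def by blast+
  have finD: "finite D" using DV fin finite_subset by blast
  define Rw where "Rw = (\<lambda>x y. E x y \<and> x \<in> W \<and> y \<in> W)"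
  define comp where "comp c = {x. Rw\<^sup>*\<^sup>* c x}" for c
  define Cs where "Cs = comp ` W"
  have compW: "comp c \<subseteq> W" if "c \<in> W" for c
    using rt_W[of E W c] that unfolding comp_def Rw_def by blast
  have Rs: "Rw\<^sup>*\<^sup>* b a" if "Rw\<^sup>*\<^sup>* a b" for a b
    using rt_sym[of E W a b] that sym unfolding Rw_def by blast
  have clos: "y \<in> C" if h: "C \<in> Cs" "x \<in> C" "y \<in> W" "E x y" for C x y
  proof -
    obtain c where c: "c \<in> W" "C = comp c" using h(1) unfolding Cs_def by blast
    have "Rw\<^sup>*\<^sup>* c x" using h(2) c unfolding comp_def by simp
    moreover have "Rw x y" using h(4,3) compW c h(2) unfolding Rw_def by blast
    ultimately have "Rw\<^sup>*\<^sup>* c y" by simp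
    then show ?thesis using c unfolding comp_def by simp
  qed
  have clos': "x \<in> C" if "C \<in> Cs" "y \<in> C" "x \<in> W" "E x y" for C x y
    using clos[OF that(1,2,3)] sym that(4) by blast
  have CsW: "C \<subseteq> W" if "C \<in> Cs" for C using that compW unfolding Cs_def by blast
  have selfC: "x \<in> comp x" for x unfolding comp_def by simp
  have compCs: "comp x \<in> Cs" if "x \<in> W" for x using that unfolding Cs_def by blast
  have disj: "C1 \<inter> C2 = {}" if h: "C1 \<in> Cs" "C2 \<in> Cs" "C1 \<noteq> C2" for C1 C2
  proof (rule ccontr)
    assume "C1 \<inter> C2 \<noteq> {}"
    then obtain x where x: "x \<in> C1" "x \<in> C2" by blast
    obtain c1 where c1: "C1 = comp c1" using h(1) unfolding Cs_def by blast
    obtain c2 where c2: "C2 = comp c2" using h(2) unfolding Cs_def by blast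
    have r1: "Rw\<^sup>*\<^sup>* c1 x" "Rw\<^sup>*\<^sup>* c2 x" using x c1 c2 unfolding comp_def by auto
    have r12: "Rw\<^sup>*\<^sup>* c1 c2" using r1(1) Rs[OF r1(2)] by (rule rtranclp_trans)
    have r21: "Rw\<^sup>*\<^sup>* c2 c1" using Rs[OF r12] .
    note r12 r21
    then have "comp c1 = comp c2" unfolding comp_def
      by (auto intro: rtranclp_trans)
    then show False using h(3) c1 c2 by simp
  qed
  have UCs: "\<Union>Cs = W" using CsW selfC compCs by blast
  have finCs: "finite Cs" using finW unfolding Cs_def by simp
  have finC: "finite C" if "C \<in> Cs" for C using CsW[OF that] finW finite_subset by blast
  define NC where "NC C = {x. E v x \<and> (\<exists>c\<in>C. E x c)}" for C
  have clique: "E x1 x2" if h: "C \<in> Cs" "x1 \<in> NC C" "x2 \<in> NC C" "x1 \<noteq> x2" for C x1 x2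
  proof -
    obtain c0 where c0: "c0 \<in> W" "C = comp c0" using h(1) unfolding Cs_def by blast
    obtain c1 where c1: "c1 \<in> C" "E x1 c1" using h(2) unfolding NC_def by blast
    obtain c2 where c2: "c2 \<in> C" "E x2 c2" using h(3) unfolding NC_def by blast
    have "Rw\<^sup>*\<^sup>* c0 c1" "Rw\<^sup>*\<^sup>* c0 c2" using c1 c2 c0 unfolding comp_def by auto
    then have R12: "Rw\<^sup>*\<^sup>* c1 c2" using Rs by (meson rtranclp_trans)
    have c1W: "c1 \<in> W" using c1 CsW h(1) by blast
    show ?thesis
      using clique_lemma[OF sg ch _ _ h(4) c1(2) c2(2) c1W, of v] R12 h(2,3) Wv
      unfolding NC_def Rw_def by blast
  qed
  have NCne: "\<exists>w. w \<in> NC C" if h: "C \<in> Cs" for C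
  proof -
    obtain c where c: "c \<in> W" "C = comp c" using h unfolding Cs_def by blast
    have "E\<^sup>*\<^sup>* c v" using conn vV c W_def unfolding connected_graph_def by blast
    moreover have "v \<notin> W" unfolding W_def by blast
    ultimately obtain x y where xy: "Rw\<^sup>*\<^sup>* c x" "x \<in> W" "y \<notin> W" "E x y"
      using exit_lemma[of E c v W] c unfolding Rw_def by blast
    have "y \<in> V" using EV xy(4) by blast
    moreover have "y \<noteq> v" using xy(2,4) Wv sym by blast
    ultimately have "E v y" using xy(3) unfolding W_def N_def by blast
    moreover have "x \<in> C" using xy(1) c unfolding comp_def by simp
    ultimately have "y \<in> NC C" using xy(4) sym unfolding NC_def by blast
    then show ?thesis by blast
  qed
  define U where "U = {C \<in> Cs. \<forall>t\<in>D. E v t \<longrightarrow> t \<notin> NC C}"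
  define S where "S = Cs - U"
  have claimA: "card (Y \<inter> C) \<le> card (D \<inter> C)" if CU: "C \<in> U" for C
  proof (rule ccontr)
    assume lt: "\<not> card (Y \<inter> C) \<le> card (D \<inter> C)"
    have CCs: "C \<in> Cs" using CU unfolding U_def by blast
    obtain w' where w': "w' \<in> NC C" using NCne[OF CCs] by blast
    define X where "X = (Y - C) \<union> (D \<inter> C) \<union> {w'}"
    have cu1: "card X \<le> card ((Y - C) \<union> (D \<inter> C)) + card {w'}" unfolding X_def by (rule card_Un_le)
    have cu2: "card ((Y - C) \<union> (D \<inter> C)) \<le> card (Y - C) + card (D \<inter> C)" by (rule card_Un_le)
    have "card X \<le> card (Y - C) + card (D \<inter> C) + 1" using cu1 cu2 by simp
    moreover have "card (Y - C) = card Y - card (Y \<inter> C)"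
      using finY by (simp add: card_Diff_subset_Int)
    moreover have "card (Y \<inter> C) \<le> card Y" using finY by (simp add: card_mono)
    ultimately have cX: "card X \<le> k" using lt cardYk by linarith
    have vw': "E v w'" using w' unfolding NC_def by blast
    have "dominating V E X"
      unfolding dominating_def
    proof (intro conjI ballI)
      have "w' \<in> V" using EV[OF vw'] by simp
      then show "X \<subseteq> V" unfolding X_def using Ydom(1) DV by blast
    next
      fix x assume xV: "x \<in> V"
      show "x \<in> X \<or> (\<exists>y\<in>X. E x y)"
      proof (cases "x = v")
        case True then show ?thesis using vw' unfolding X_def by blast
      next
        case xv: False
        show ?thesis
        proof (cases "x \<in> N")
          case True
          then have "x \<notin> Y" using YW unfolding W_def by blast
          then obtain y where y: "y \<in> Y" "E x y" using Ydom(2)[of x] xV xv by blast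
          show ?thesis
          proof (cases "y \<in> C")
            case False then show ?thesis using y unfolding X_def by blast
          next
            case True
            then have "x \<in> NC C" using y True \<open>x \<in> N\<close> unfolding NC_def N_def by blast
            then show ?thesis using clique[OF CCs _ w'] unfolding X_def by blast
          qed
        next
          case False
          then have xW: "x \<in> W" unfolding W_def using xV xv by blast
          show ?thesis
          proof (cases "x \<in> C")
            case True
            show ?thesis
            proof (cases "x \<in> D")
              case True then show ?thesis using \<open>x \<in> C\<close> unfolding X_def by blast
            next
              case False
              then obtain y where y: "y \<in> D" "E x y" using Ddom xV by blast
              have "y \<noteq> v" using y(2) Wv[OF xW] sym by blast
              moreover have "y \<notin> N"
              proof
                assume "y \<in> N"
                then have "y \<in> NC C" using y(2) sym \<open>x \<in> C\<close> unfolding NC_def N_def by blast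
                then show False using CU y(1) \<open>y \<in> N\<close> unfolding U_def N_def by blast
              qed
              ultimately have "y \<in> W" using y DV unfolding W_def by blast
              then have "y \<in> C" using clos[OF CCs \<open>x \<in> C\<close> _ y(2)] by blast
              then show ?thesis using y unfolding X_def by blast
            qed
          next
            case False
            have "x \<in> Y \<or> (\<exists>y\<in>Y. E x y)" using Ydom(2) xV xv by blast
            then show ?thesis
            proof
              assume "x \<in> Y" then show ?thesis using False unfolding X_def by blast
            next
              assume "\<exists>y\<in>Y. E x y"
              then obtain y where y: "y \<in> Y" "E x y" by blast
              have "y \<notin> C" using clos'[OF CCs _ xW y(2)] False by blast
              then show ?thesis using y unfolding X_def by blast
            qed
          qed
        qed
      qed
    qed
    moreover have "v \<notin> X" unfolding X_def using Ydom(1) CsW[OF CCs] Wv vw' irr by blast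
    ultimately show False using avoid cX by blast
  qed
  have USub: "U \<subseteq> Cs" and SSub: "S \<subseteq> Cs" unfolding U_def S_def by auto
  have cardUnion: "card (A \<inter> \<Union>T) = (\<Sum>C\<in>T. card (A \<inter> C))" if "T \<subseteq> Cs" for A T
  proof -
    have "A \<inter> \<Union>T = (\<Union>C\<in>T. A \<inter> C)" by blast
    moreover have "card (\<Union>C\<in>T. A \<inter> C) = (\<Sum>C\<in>T. card (A \<inter> C))"
    proof (rule card_UN_disjoint)
      show "finite T" using that finCs finite_subset by blast
      show "\<forall>i\<in>T. finite (A \<inter> i)" using that finC by blast
      show "\<forall>i\<in>T. \<forall>j\<in>T. i \<noteq> j \<longrightarrow> A \<inter> i \<inter> (A \<inter> j) = {}" using that disj by blast
    qed
    ultimately show ?thesis by simp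
  qed
  have YU: "card (Y \<inter> \<Union>U) \<le> card (D \<inter> \<Union>U)"
    unfolding cardUnion[OF USub] by (rule sum_mono) (rule claimA)
  define Z where "Z = (Y \<inter> \<Union>U) \<union> (D \<inter> \<Union>S) \<union> (D \<inter> N)"
  have cz1: "card Z \<le> card ((Y \<inter> \<Union>U) \<union> (D \<inter> \<Union>S)) + card (D \<inter> N)" unfolding Z_def by (rule card_Un_le)
  have cz2: "card ((Y \<inter> \<Union>U) \<union> (D \<inter> \<Union>S)) \<le> card (Y \<inter> \<Union>U) + card (D \<inter> \<Union>S)" by (rule card_Un_le)
  have cZ1: "card Z \<le> card (Y \<inter> \<Union>U) + card (D \<inter> \<Union>S) + card (D \<inter> N)" using cz1 cz2 by simp
  have US: "\<Union>U \<inter> \<Union>S = {}"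
  proof (rule equals0I)
    fix x assume "x \<in> \<Union>U \<inter> \<Union>S"
    then obtain C1 C2 where "C1 \<in> U" "C2 \<in> S" "x \<in> C1" "x \<in> C2" by blast
    moreover have "C1 \<in> Cs" "C2 \<in> Cs" "C1 \<noteq> C2" using \<open>C1 \<in> U\<close> \<open>C2 \<in> S\<close> USub SSub unfolding S_def by blast+
    ultimately show False using disj[of C1 C2] by blast
  qed
  have USW: "\<Union>U \<union> \<Union>S = W"
  proof -
    have "U \<union> S = Cs" using USub unfolding S_def by blast
    then have "\<Union>U \<union> \<Union>S = \<Union>Cs" by blast
    then show ?thesis using UCs by simp
  qed
  have WN: "W \<inter> N = {}" unfolding W_def by blast
  have DvWN: "D - {v} \<subseteq> W \<union> N" using DV unfolding W_def by blast
  have Dsplit: "D - {v} = ((D \<inter> \<Union>U) \<union> (D \<inter> \<Union>S)) \<union> (D \<inter> N)"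
  proof
    show "D - {v} \<subseteq> ((D \<inter> \<Union>U) \<union> (D \<inter> \<Union>S)) \<union> (D \<inter> N)" using DvWN USW by blast
    show "((D \<inter> \<Union>U) \<union> (D \<inter> \<Union>S)) \<union> (D \<inter> N) \<subseteq> D - {v}" using USW unfolding W_def N_def by (auto simp: irr)
  qed
  have f: "finite (D \<inter> X)" for X using finD by simp
  have d1: "((D \<inter> \<Union>U) \<union> (D \<inter> \<Union>S)) \<inter> (D \<inter> N) = {}" using USW WN by blast
  have d2: "(D \<inter> \<Union>U) \<inter> (D \<inter> \<Union>S) = {}" using US by blast
  have e1: "card (((D \<inter> \<Union>U) \<union> (D \<inter> \<Union>S)) \<union> (D \<inter> N)) = card ((D \<inter> \<Union>U) \<union> (D \<inter> \<Union>S)) + card (D \<inter> N)"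
    by (rule card_Un_disjoint[OF _ f d1]) (simp add: finD)
  have e2: "card ((D \<inter> \<Union>U) \<union> (D \<inter> \<Union>S)) = card (D \<inter> \<Union>U) + card (D \<inter> \<Union>S)"
    by (rule card_Un_disjoint[OF f f d2])
  have cDv: "card (D - {v}) = card (D \<inter> \<Union>U) + card (D \<inter> \<Union>S) + card (D \<inter> N)"
    using e1 e2 Dsplit by simp
  have cDv2: "card (D - {v}) = k - 1" using cardD vD finD by simp
  have k1: "k \<ge> 1" using cardD vD finD card_gt_0_iff[of D] by auto
  have cZ: "card Z < k"
  proof -
    have "card Z \<le> card (D \<inter> \<Union>U) + card (D \<inter> \<Union>S) + card (D \<inter> N)" using cZ1 YU by simp
    then have "card Z \<le> k - 1" using cDv cDv2 by simp
    then show ?thesis using k1 by simp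
  qed
  have "dominating (V - {v}) H Z"
    unfolding domH
  proof (intro conjI ballI)
    have a1: "\<Union>U \<subseteq> W" "\<Union>S \<subseteq> W" using USW by blast+
    have a2: "W \<subseteq> V - {v}" unfolding W_def by blast
    have a3: "D \<inter> N \<subseteq> V - {v}" using DV irr unfolding N_def by blast
    show "Z \<subseteq> V - {v}" unfolding Z_def using YW a1 a2 a3 by blast
  next
    fix x assume xV: "x \<in> V - {v}"
    show "x \<in> Z \<or> (\<exists>y\<in>Z. E x y)"
    proof (cases "x \<in> N")
      case False
      then have xW: "x \<in> W" using xV unfolding W_def by blast
      define C where "C = comp x"
      have CCs: "C \<in> Cs" using compCs[OF xW] C_def by simp
      have xC: "x \<in> C" using selfC C_def by simp
      show ?thesis
      proof (cases "C \<in> U")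
        case True
        have "x \<in> Y \<or> (\<exists>y\<in>Y. E x y)" using Ydom(2) xV by blast
        then show ?thesis
        proof
          assume "x \<in> Y" then show ?thesis using True xC unfolding Z_def by blast
        next
          assume "\<exists>y\<in>Y. E x y"
          then obtain y where y: "y \<in> Y" "E x y" by blast
          have "y \<in> C" using clos[OF CCs xC _ y(2)] YW y(1) by blast
          then show ?thesis using y True unfolding Z_def by blast
        qed
      next
        case False
        then have CS: "C \<in> S" using CCs unfolding S_def by blast
        have "x \<in> D \<or> (\<exists>y\<in>D. E x y)" using Ddom xV by blast
        then show ?thesis
        proof
          assume "x \<in> D" then show ?thesis using CS xC unfolding Z_def by blast
        next
          assume "\<exists>y\<in>D. E x y"
          then obtain y where y: "y \<in> D" "E x y" by blast
          have "y \<noteq> v" using y(2) Wv[OF xW] sym by blast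
          show ?thesis
          proof (cases "y \<in> N")
            case True then show ?thesis using y unfolding Z_def by blast
          next
            case False
            then have "y \<in> W" using y DV \<open>y \<noteq> v\<close> unfolding W_def by blast
            then have "y \<in> C" using clos[OF CCs xC _ y(2)] by blast
            then show ?thesis using y CS unfolding Z_def by blast
          qed
        qed
      qed
    next
      case True
      then have "x \<notin> Y" using YW unfolding W_def by blast
      then obtain y where y: "y \<in> Y" "E x y" using Ydom(2) xV by blast
      have yW: "y \<in> W" using y(1) YW by blast
      define C where "C = comp y"
      have CCs: "C \<in> Cs" using compCs[OF yW] C_def by simp
      have yC: "y \<in> C" using selfC C_def by simp
      show ?thesis
      proof (cases "C \<in> U")
        case True then show ?thesis using y yC unfolding Z_def by blast
      next
        case False
        then obtain t where t: "t \<in> D" "E v t" "t \<in> NC C" using CCs unfolding U_def by blast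
        have "x \<in> NC C" using True y yC unfolding NC_def N_def by blast
        then have "x = t \<or> E x t" using clique[OF CCs _ t(3)] by blast
        moreover have "t \<in> Z" using t unfolding Z_def N_def by blast
        ultimately show ?thesis by blast
      qed
    qed
  qed
  then have "gamma_del V E v \<le> card Z" using gamma_le[OF finVv] unfolding gamma_del_def H_def by blast
  then show False using cZ cardY cardYk by simp
qed


lemma del_dom: "dominating (V - {v}) (del_vertex_edges E v) X \<longleftrightarrow> X \<subseteq> V - {v} \<and> (\<forall>x\<in>V - {v}. x \<in> X \<or> (\<exists>y\<in>X. E x y))"
  unfolding dominating_def del_vertex_edges_def by blast

lemma plus_core:
  assumes fin: "finite V" and vV: "v \<in> V" and p: "gamma_del V E v > domination_number V E"
  shows "v \<in> core V E"
proof -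
  have "\<forall>D. mds V E D \<longrightarrow> v \<in> D"
  proof (intro allI impI)
    fix D assume D: "mds V E D"
    show "v \<in> D"
    proof (rule ccontr)
      assume nv: "v \<notin> D"
      have DV: "D \<subseteq> V" and Dd: "\<And>x. x \<in> V \<Longrightarrow> x \<in> D \<or> (\<exists>y\<in>D. E x y)"
        using D unfolding mds_def dominating_def by blast+
      have "dominating (V - {v}) (del_vertex_edges E v) D"
        unfolding del_dom using DV Dd nv by blast
      then have "gamma_del V E v \<le> card D" unfolding gamma_del_def using fin by (simp add: gamma_le)
      then show False using p D unfolding mds_def by simp
    qed
  qed
  then show ?thesis unfolding core_def using vV by blast
qed

lemma minus_corona:
  assumes fin: "finite V" and vV: "v \<in> V" and p: "gamma_del V E v < domination_number V E"
  shows "v \<in> corona V E"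
proof -
  obtain Y where Y: "mds (V - {v}) (del_vertex_edges E v) Y" using ex_mds[of "V - {v}"] fin by auto
  have Yd: "Y \<subseteq> V - {v}" "\<And>x. x \<in> V - {v} \<Longrightarrow> x \<in> Y \<or> (\<exists>y\<in>Y. E x y)"
    using Y unfolding mds_def del_dom by blast+
  have finY: "finite Y" using Yd(1) fin finite_subset by blast
  have cY: "card Y < domination_number V E" using Y p unfolding mds_def gamma_del_def by simp
  have dd: "dominating V E (insert v Y)" unfolding dominating_def using Yd vV by blast
  have "card (insert v Y) \<le> domination_number V E" using cY finY by (simp add: card_insert_if)
  moreover have "domination_number V E \<le> card (insert v Y)" using gamma_le[OF fin dd] .
  ultimately have "mds V E (insert v Y)" using dd unfolding mds_def by simp
  then show ?thesis unfolding corona_def using vV by blast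
qed

lemma pendant:
  assumes sg: "simple_graph V E" and vV: "v \<in> V" and uV: "u \<notin> V"
  shows "domination_number V E \<le> gamma_pendant V E v u"
    "gamma_pendant V E v u \<le> domination_number V E + 1"
    "v \<in> corona V E \<longleftrightarrow> gamma_pendant V E v u = domination_number V E"
proof -
  have EV: "\<And>x y. E x y \<Longrightarrow> x \<in> V \<and> y \<in> V" and fin: "finite V"
    using sg unfolding simple_graph_def by blast+
  define E' where "E' = add_pendant_edges E v u"
  define k where "k = domination_number V E"
  define g where "g = gamma_pendant V E v u"
  have g_def': "g = domination_number (insert u V) E'" unfolding g_def gamma_pendant_def E'_def ..
  have fin': "finite (insert u V)" using fin by simp
  have uv: "u \<noteq> v" using uV vV by blast
  obtain D where D: "mds V E D" using ex_mds[OF fin] by blast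
  have DV: "D \<subseteq> V" and Dd: "\<And>x. x \<in> V \<Longrightarrow> x \<in> D \<or> (\<exists>y\<in>D. E x y)" and cD: "card D = k"
    using D unfolding mds_def dominating_def k_def by blast+
  have finD: "finite D" using DV fin finite_subset by blast
  have "dominating (insert u V) E' (insert u D)"
    unfolding dominating_def E'_def add_pendant_edges_def using DV Dd by blast
  then have "g \<le> card (insert u D)" using gamma_le[OF fin'] g_def' by simp
  also have "\<dots> \<le> k + 1" using cD finD by (simp add: card_insert_if)
  finally have up: "g \<le> k + 1" .
  obtain D' where D': "mds (insert u V) E' D'" using ex_mds[OF fin'] by blast
  have D'V: "D' \<subseteq> insert u V" and D'd: "\<And>x. x \<in> insert u V \<Longrightarrow> x \<in> D' \<or> (\<exists>y\<in>D'. E' x y)" and cD': "card D' = g"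
    using D' unfolding mds_def dominating_def g_def' by blast+
  have finD': "finite D'" using D'V fin' finite_subset by blast
  define D'' where "D'' = insert v (D' - {u})"
  have dd: "dominating V E D''"
    unfolding dominating_def
  proof (intro conjI ballI)
    show "D'' \<subseteq> V" unfolding D''_def using D'V vV by blast
  next
    fix x assume xV: "x \<in> V"
    then have xu: "x \<noteq> u" using uV by blast
    have "x \<in> D' \<or> (\<exists>y\<in>D'. E' x y)" using D'd xV by blast
    then show "x \<in> D'' \<or> (\<exists>y\<in>D''. E x y)"
    proof
      assume "x \<in> D'" then show ?thesis using xu unfolding D''_def by blast
    next
      assume "\<exists>y\<in>D'. E' x y"
      then obtain y where y: "y \<in> D'" "E' x y" by blast
      then have "E x y \<or> x = v" using xu unfolding E'_def add_pendant_edges_def by blast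
      then show ?thesis
      proof
        assume "E x y"
        then have "y \<noteq> u" using EV uV by blast
        then show ?thesis using y \<open>E x y\<close> unfolding D''_def by blast
      qed (simp add: D''_def)
    qed
  qed
  have cD'': "card D'' \<le> g"
  proof (cases "u \<in> D'")
    case True
    have "card D'' \<le> Suc (card (D' - {u}))" unfolding D''_def using finD' by (simp add: card_insert_if)
    also have "\<dots> = card D'" by (rule card_Suc_Diff1[OF finD' True])
    finally show ?thesis using cD' by simp
  next
    case False
    then obtain y where "y \<in> D'" "E' u y" using D'd[of u] by blast
    then have "y = v" using uv EV uV unfolding E'_def add_pendant_edges_def by blast
    then have "D'' = D'" using False \<open>y \<in> D'\<close> unfolding D''_def by blast
    then show ?thesis using cD' by simp
  qed
  have low: "k \<le> card D''" using gamma_le[OF fin dd] k_def by simp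
  then show "domination_number V E \<le> gamma_pendant V E v u" using cD'' k_def g_def by simp
  show "gamma_pendant V E v u \<le> domination_number V E + 1" using up k_def g_def by simp
  show "v \<in> corona V E \<longleftrightarrow> gamma_pendant V E v u = domination_number V E"
  proof
    assume "v \<in> corona V E"
    then obtain D0 where D0: "mds V E D0" "v \<in> D0" unfolding corona_def by blast
    have "dominating (insert u V) E' D0"
      using D0 unfolding mds_def dominating_def E'_def add_pendant_edges_def by blast
    then have "g \<le> card D0" using gamma_le[OF fin'] g_def' by simp
    then have "g \<le> k" using D0 unfolding mds_def k_def by simp
    then show "gamma_pendant V E v u = domination_number V E" using low cD'' k_def g_def by simp
  next
    assume "gamma_pendant V E v u = domination_number V E"
    then have "card D'' = k" using low cD'' k_def g_def by simp
    then have "mds V E D''" using dd unfolding mds_def k_def by simp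
    then show "v \<in> corona V E" unfolding corona_def D''_def using vV by blast
  qed
qed

theorem theorem6:
  fixes V :: "'a set" and E :: "'a \<Rightarrow> 'a \<Rightarrow> bool" and v :: 'a
  assumes "simple_graph V E" and "connected_graph V E" and "chordal V E"
    and "card V \<ge> 2" and "v \<in> V"
  shows "(v \<in> core V E \<longleftrightarrow> v \<in> V_plus V E)
    \<and> (\<forall>u. u \<notin> V \<longrightarrow>
         (v \<in> anticore V E \<longleftrightarrow> gamma_pendant V E v u = domination_number V E + 1)
       \<and> (v \<in> corona V E - core V E \<longleftrightarrow>
            (v \<in> V_minus V E \<or>
             (v \<in> V_zero V E \<and> gamma_pendant V E v u = domination_number V E))))"
proof -
  have fin: "finite V" using assms(1) unfolding simple_graph_def by blast
  have p1: "v \<in> core V E \<longleftrightarrow> gamma_del V E v > domination_number V E"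
  proof
    assume c: "v \<in> core V E"
    show "gamma_del V E v > domination_number V E"
    proof (rule ccontr)
      assume "\<not> ?thesis"
      then show False using core_plus[OF assms c] by simp
    qed
  next
    assume "gamma_del V E v > domination_number V E"
    then show "v \<in> core V E" using plus_core[OF fin assms(5)] by blast
  qed
  have Vp: "v \<in> V_plus V E \<longleftrightarrow> gamma_del V E v > domination_number V E"
    unfolding V_plus_def using assms(5) by simp
  have Vz: "v \<in> V_zero V E \<longleftrightarrow> gamma_del V E v = domination_number V E"
    unfolding V_zero_def using assms(5) by simp
  have Vm: "v \<in> V_minus V E \<longleftrightarrow> gamma_del V E v < domination_number V E"
    unfolding V_minus_def using assms(5) by simp
  show ?thesis
  proof (intro conjI allI impI)
    show "v \<in> core V E \<longleftrightarrow> v \<in> V_plus V E" using p1 Vp by simp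
  next
    fix u assume u: "u \<notin> V"
    note pd = pendant[OF assms(1) assms(5) u]
    show "v \<in> anticore V E \<longleftrightarrow> gamma_pendant V E v u = domination_number V E + 1"
      unfolding anticore_def using pd assms(5) by auto
    show "v \<in> corona V E - core V E \<longleftrightarrow>
            (v \<in> V_minus V E \<or> (v \<in> V_zero V E \<and> gamma_pendant V E v u = domination_number V E))"
      using p1 Vz Vm pd(3) minus_corona[OF fin assms(5)] by (auto simp: not_less)
  qed
qed

end
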